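(* Let $L_{k-1}>0$, $L_k>0$, $\mu_f>0$, $\tau_{k-1},\tau_k\in(0,1)$, and set $m_k:=\frac{L_k+\mu_f}{L_{k-1}+\mu_f}$, $a_k:=\frac{L_k}{L_{k-1}+\mu_f}$. Assume $$(1-\tau_k)\big[\tau_{k-1}^2+m_k\tau_k\big]\ge a_k\tau_k\qquad\text{and}\qquad m_k\tau_k\tau_{k-1}^2+m_k^2\tau_k^2\ge a_k\tau_{k-1}^2.$$ Then the interval $$\max\Big\{\frac{\tau_{k-1}+\sqrt{\tau_{k-1}^2+4a_k}}{2(1-\tau_{k-1})},\ \frac{a_k\tau_k}{(1-\tau_k)(1-\tau_{k-1})\tau_{k-1}}\Big\}\le\omega_k\le\frac{\tau_{k-1}^2+m_k\tau_k}{\tau_{k-1}(1-\tau_{k-1})}$$ is nonempty, and for any $\omega_k$ in it, any $x^{k-1},x^k,x\in\mathbb{R}^p$, and $\hat x^k:=x^k+\frac{1}{\omega_k}(x^k-x^{k-1})$, $$L_k\tau_k^2\big\|\tfrac1{\tau_k}[\hat x^k-(1-\tau_k)x^k]-x\big\|^2-\mu_f\tau_k(1-\tau_k)\|x^k-x\|^2\le(1-\tau_k)(L_{k-1}+\mu_f)\tau_{k-1}^2\big\|\tfrac1{\tau_{k-1}}[x^k-(1-\tau_{k-1})x^{k-1}]-x\big\|^2.$$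
   Context: Norms are Euclidean on $\mathbb{R}^p$. *)

theory Defs
  imports "HOL-Analysis.Analysis"
begin

end

theory Submission
  imports Defs
begin


lemma quad_nonneg:
  fixes A B C P Y U :: real
  assumes "A \<ge> 0" "C \<ge> 0" "B^2 \<le> A*C" "\<bar>P\<bar> \<le> Y*U" "Y \<ge> 0" "U \<ge> 0"
  shows "A*Y^2 + 2*B*P + C*U^2 \<ge> 0"
proof (cases "A = 0")
  case True
  then have "B = 0" using assms(3) by simp
  then show ?thesis using True assms by simp
next
  case False
  then have Ap: "A > 0" using assms(1) by simp
  have "\<bar>B*P\<bar> \<le> \<bar>B\<bar>*(Y*U)"
    using assms(4) by (simp add: abs_mult mult_left_mono)
  then have h0: "B*P \<ge> - (\<bar>B\<bar>*(Y*U))" by (auto simp: abs_le_iff)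
  have "2*\<bar>B\<bar>*Y*U = 2*(\<bar>B\<bar>*(Y*U))" by simp
  then have h1: "A*Y^2 + 2*B*P + C*U^2 \<ge> A*Y^2 - 2*\<bar>B\<bar>*Y*U + C*U^2" using h0 by linarith
  have "A*(A*Y^2 - 2*\<bar>B\<bar>*Y*U + C*U^2) = (A*Y - \<bar>B\<bar>*U)^2 + (A*C - B^2)*U^2"
    by (simp add: power2_eq_square algebra_simps)
  also have "\<dots> \<ge> 0" using assms(3) by (intro add_nonneg_nonneg) auto
  finally have "A*Y^2 - 2*\<bar>B\<bar>*Y*U + C*U^2 \<ge> 0"
    using Ap by (simp add: zero_le_mult_iff)
  with h1 show ?thesis by linarith
qed

lemma norm_comb_sq:
  fixes y u :: "'a::real_inner"
  shows "(norm (y + c *\<^sub>R u))^2 = (norm y)^2 + 2*c*(inner y u) + c^2 * (norm u)^2"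
  unfolding power2_norm_eq_inner
  by (simp add: inner_add_left inner_add_right inner_commute algebra_simps power2_eq_square)

theorem lemma7:
  fixes Lprev L mu tauprev tau :: real
  assumes hLprev: "Lprev > 0" and hL: "L > 0" and hmu: "mu > 0"
    and htauprev: "0 < tauprev" "tauprev < 1"
    and htau: "0 < tau" "tau < 1"
  defines "m \<equiv> (L + mu) / (Lprev + mu)"
    and "a \<equiv> L / (Lprev + mu)"
  assumes c1: "(1 - tau) * (tauprev^2 + m * tau) \<ge> a * tau"
    and c2: "m * tau * tauprev^2 + m^2 * tau^2 \<ge> a * tauprev^2"
  shows "(\<exists>\<omega>::real.
            max ((tauprev + sqrt (tauprev^2 + 4 * a)) / (2 * (1 - tauprev)))
                (a * tau / ((1 - tau) * (1 - tauprev) * tauprev)) \<le> \<omega>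
          \<and> \<omega> \<le> (tauprev^2 + m * tau) / (tauprev * (1 - tauprev)))
    \<and> (\<forall>\<omega>::real. \<forall>(xprev :: real^'p) xk x.
          max ((tauprev + sqrt (tauprev^2 + 4 * a)) / (2 * (1 - tauprev)))
              (a * tau / ((1 - tau) * (1 - tauprev) * tauprev)) \<le> \<omega>
          \<and> \<omega> \<le> (tauprev^2 + m * tau) / (tauprev * (1 - tauprev)) \<longrightarrow>
          (let xhat = xk + (1 / \<omega>) *\<^sub>R (xk - xprev) in
            L * tau^2 * (norm ((1 / tau) *\<^sub>R (xhat - (1 - tau) *\<^sub>R xk) - x))^2
              - mu * tau * (1 - tau) * (norm (xk - x))^2
            \<le> (1 - tau) * (Lprev + mu) * tauprev^2
              * (norm ((1 / tauprev) *\<^sub>R (xk - (1 - tauprev) *\<^sub>R xprev) - x))^2))"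
  
proof -
  define t where "t = tauprev"
  define s where "s = tau"
  define D where "D = Lprev + mu"
  have Dp: "D > 0" using hLprev hmu by (simp add: D_def)
  have Lid: "L = a * D" using Dp by (simp add: a_def D_def)
  have mD: "m * D = L + mu" using Dp by (simp add: m_def D_def)
  have muid: "mu = m * D - a * D" using mD Lid by simp
  have ap: "a > 0" using hL Dp by (simp add: a_def D_def)
  have mp: "m > 0" using hL hmu Dp by (simp add: m_def D_def)
  have t0: "0 < t" "t < 1" using htauprev by (auto simp: t_def)
  have s0: "0 < s" "s < 1" using htau by (auto simp: s_def)
  define lo1 where "lo1 = (tauprev + sqrt (tauprev^2 + 4 * a)) / (2 * (1 - tauprev))"
  define lo2 where "lo2 = a * tau / ((1 - tau) * (1 - tauprev) * tauprev)"
  define hi where "hi = (tauprev^2 + m * tau) / (tauprev * (1 - tauprev))"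
  have c1': "(1 - s) * (t^2 + m * s) \<ge> a * s" using c1 by (simp add: s_def t_def)
  have c2': "m * s * t^2 + m^2 * s^2 \<ge> a * t^2" using c2 by (simp add: s_def t_def)
  define r where "r = sqrt (t^2 + 4*a)"
  have r0: "r \<ge> 0" and r2: "r^2 = t^2 + 4*a" using ap t0 by (auto simp: r_def)
  have lo1_le: "lo1 \<le> hi"
  proof -
    have "t * r \<le> t^2 + 2*m* s"
    proof -
      have "(t*r)^2 = t^2*(t^2+4*a)" by (simp add: power_mult_distrib r2)
      also have "\<dots> \<le> (t^2 + 2*m* s)^2"
      proof -
        have "(t^2 + 2*m* s)^2 - t^2*(t^2+4*a) = 4*(m * s * t^2 + m^2 * s^2 - a * t^2)"
          by (simp add: power2_eq_square algebra_simps)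
        moreover have "0 \<le> 4*(m * s * t^2 + m^2 * s^2 - a * t^2)" using c2' by simp
        ultimately have "0 \<le> (t^2 + 2*m* s)^2 - t^2*(t^2+4*a)" by simp
        then show ?thesis by (simp only: diff_ge_0_iff_ge)
      qed
      finally have "(t*r)^2 \<le> (t^2 + 2*m* s)^2" .
      moreover have "t^2 + 2*m* s \<ge> 0" using mp s0 by simp
      ultimately show ?thesis using power2_le_imp_le by blast
    qed
    then have le: "t*(t+r) \<le> 2*(t^2 + m* s)" by (simp add: algebra_simps power2_eq_square)
    have e1: "(t + r) / (2*(1-t)) = (t*(t+r))/(2*t*(1-t))" using t0 by simp
    have e2: "(t^2 + m* s)/(t*(1-t)) = (2*(t^2 + m* s))/(2*t*(1-t))"
      using t0 by (simp only: mult.assoc mult_divide_mult_cancel_left_if) simp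
    have "(t*(t+r))/(2*t*(1-t)) \<le> (2*(t^2 + m* s))/(2*t*(1-t))"
      using le t0 by (intro divide_right_mono) auto
    then have "(t + r) / (2*(1-t)) \<le> (t^2 + m* s)/(t*(1-t))" using e1 e2 by simp
    then show ?thesis by (simp add: lo1_def hi_def r_def t_def s_def)
  qed
  have lo2_le: "lo2 \<le> hi"
  proof -
    have den: "(1-s)*(t*(1-t)) > 0" using t0 s0 by simp
    have "a* s/((1-s)*(t*(1-t))) \<le> ((1-s)*(t^2 + m* s))/((1-s)*(t*(1-t)))"
      using c1' den by (intro divide_right_mono) auto
    also have "\<dots> = (t^2 + m* s)/(t*(1-t))" using s0 by simp
    finally have "a* s/((1-s)*(1-t)*t) \<le> (t^2 + m* s)/(t*(1-t))" by (simp add: ac_simps)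
    then show ?thesis by (simp add: lo2_def hi_def t_def s_def)
  qed
  have part1: "\<exists>\<omega>::real. max lo1 lo2 \<le> \<omega> \<and> \<omega> \<le> hi"
    using lo1_le lo2_le by (intro exI[of _ hi]) simp
  have part2: "(let xhat = xk + (1 / w) *\<^sub>R (xk - xprev) in
            L * tau^2 * (norm ((1 / tau) *\<^sub>R (xhat - (1 - tau) *\<^sub>R xk) - x))^2
              - mu * tau * (1 - tau) * (norm (xk - x))^2
            \<le> (1 - tau) * (Lprev + mu) * tauprev^2
              * (norm ((1 / tauprev) *\<^sub>R (xk - (1 - tauprev) *\<^sub>R xprev) - x))^2)"
    if hw: "max lo1 lo2 \<le> w" "w \<le> hi" for w :: real and xprev xk x :: "real^'p"
  proof -
    define z where "z = (1 - t) * w"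
    have w1: "lo1 \<le> w" and w2: "lo2 \<le> w" using hw by auto
    have lo1p: "lo1 > 0" using t0 r0 by (simp add: lo1_def r_def[symmetric] t_def[symmetric])
    have wp: "w > 0" using lo1p w1 by linarith
    have zp: "z > 0" using wp t0 by (simp add: z_def)
    have zsq: "z^2 \<ge> t*z + a"
    proof -
      have "(t + r)/(2*(1-t)) \<le> w" using w1 by (simp add: lo1_def r_def t_def)
      then have "t + r \<le> w*(2*(1-t))" using t0 by (simp add: pos_divide_le_eq)
      then have "t + r \<le> 2*z" by (simp add: z_def algebra_simps)
      then have "r \<le> 2*z - t" by simp
      then have "r^2 \<le> (2*z - t)^2" using r0 by (intro power_mono) auto
      then show ?thesis using r2 by (simp add: power2_eq_square algebra_simps)
    qed
    have zlo2: "(1-s)*t*z \<ge> a* s"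
    proof -
      have "a* s/((1-s)*(1-t)*t) \<le> w" using w2 by (simp add: lo2_def s_def t_def)
      then have "a* s \<le> w*((1-s)*(1-t)*t)" using t0 s0 by (simp add: pos_divide_le_eq)
      then show ?thesis by (simp add: z_def algebra_simps)
    qed
    have zhi: "t*z \<le> t^2 + m* s"
    proof -
      have "w \<le> (t^2 + m* s)/(t*(1-t))" using hw(2) by (simp add: hi_def s_def t_def)
      then have "w*(t*(1-t)) \<le> t^2 + m* s" using t0 by (simp add: pos_le_divide_eq)
      then show ?thesis by (simp add: z_def algebra_simps)
    qed
    define A where "A = (1-s)*(t^2+m* s) - a* s"
    define B where "B = (1-s)*t*(1-t) - a* s/w"
    define C where "C = (1-s)*(1-t)^2 - a/w^2"
    have A0: "A \<ge> 0" using c1' by (simp add: A_def)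
    have Cz: "(1-s)*z^2 \<ge> a"
    proof -
      have "(1-s)*z^2 \<ge> (1-s)*(t*z + a)" using zsq s0 by (intro mult_left_mono) auto
      then show ?thesis using zlo2 by (simp add: algebra_simps)
    qed
    have Ceq: "C = ((1-s)*z^2 - a)/w^2" using wp by (simp add: C_def z_def field_simps) (simp add: power2_eq_square algebra_simps)
    have C0: "C \<ge> 0" using Cz by (simp add: Ceq)
    have key: "w^2*(A*C - B^2) = (1-s)*((m* s - t*(z-t))*((1-s)*z*z - a) + (z*(z-t) - a)*((1-s)*t*z - s*a))"
      using wp by (simp add: A_def B_def C_def z_def field_simps power2_eq_square)
    have "(m* s - t*(z-t))*((1-s)*z*z - a) \<ge> 0"
      using zhi Cz by (intro mult_nonneg_nonneg) (auto simp: algebra_simps power2_eq_square)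
    moreover have "(z*(z-t) - a)*((1-s)*t*z - s*a) \<ge> 0"
      using zsq zlo2 by (intro mult_nonneg_nonneg) (auto simp: algebra_simps power2_eq_square)
    ultimately have "w^2*(A*C - B^2) \<ge> 0" using s0 by (simp add: key)
    then have ACB: "B^2 \<le> A*C" using wp by (simp add: zero_le_mult_iff)
    define y where "y = xk - x"
    define u where "u = xk - xprev"
    have e1: "(1 / tau) *\<^sub>R ((xk + (1 / w) *\<^sub>R (xk - xprev)) - (1 - tau) *\<^sub>R xk) - x
              = y + (1/(s*w)) *\<^sub>R u"
      using s0 by (simp add: y_def u_def s_def algebra_simps)
    have e2: "(1 / tauprev) *\<^sub>R (xk - (1 - tauprev) *\<^sub>R xprev) - x = y + ((1-t)/t) *\<^sub>R u"
      using t0 by (simp add: y_def u_def t_def algebra_simps diff_divide_distrib)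
    define Y where "Y = norm y"
    define U where "U = norm u"
    define P where "P = inner y u"
    have PYU: "\<bar>P\<bar> \<le> Y*U" unfolding P_def Y_def U_def by (rule Cauchy_Schwarz_ineq2)
    have Q: "A*Y^2 + 2*B*P + C*U^2 \<ge> 0"
      using quad_nonneg[OF A0 C0 ACB PYU] by (simp add: Y_def U_def)
    have "L * s^2 * (Y^2 + 2*(1/(s*w))*P + (1/(s*w))^2*U^2) - mu* s*(1-s)*Y^2
          \<le> (1-s)*D*t^2*(Y^2 + 2*((1-t)/t)*P + ((1-t)/t)^2*U^2)"
    proof -
      have "(1-s)*D*t^2*(Y^2 + 2*((1-t)/t)*P + ((1-t)/t)^2*U^2)
            - (L * s^2 * (Y^2 + 2*(1/(s*w))*P + (1/(s*w))^2*U^2) - mu* s*(1-s)*Y^2)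
            = D*(A*Y^2 + 2*B*P + C*U^2)"
        unfolding Lid muid A_def B_def C_def using t0 s0 wp
        by (simp add: field_simps power2_eq_square)
      moreover have "D*(A*Y^2 + 2*B*P + C*U^2) \<ge> 0" using Dp Q by simp
      ultimately show ?thesis by linarith
    qed
    then show ?thesis
      unfolding Let_def e1 e2 norm_comb_sq y_def[symmetric]
      by (simp add: Y_def U_def P_def D_def s_def t_def)
  qed
  show ?thesis
    using part1 part2 unfolding lo1_def lo2_def hi_def by blast
qed

end
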